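(* Let $T$ be a tree on $[n]$ and $G$ a connected graph on $[n]$. Then $T(G)=T$ if and only if $G$ can be obtained from $T$ by adding some subset of the edges permitted by ${\bf oDFS}(T)$.
   Context: Ordered depth-first search. For a connected graph $G$ on $[n]$, ${\bf oDFS}(G)$ is the procedure: set $\mathcal O_0=(1)$ (an ordered list) and $\mathcal A_0=\emptyset$. For $i=0,1,\dots,n-1$: let $v_i$ be the first element of $\mathcal O_i$; let $\mathcal N_i$ be the set of neighbours of $v_i$ in $[n]\setminus(\mathcal A_i\cup\mathcal O_i)$; set $\mathcal A_{i+1}=\mathcal A_i\cup\{v_i\}$; form $\mathcal O_{i+1}$ by removing $v_i$ from the front of $\mathcal O_i$ and then placing the elements of $\mathcal N_i$, in increasing order, at the front. The depth-first tree $T(G)$ is the spanning tree of $G$ with edge set $\{v_iy:0\le i<n,\ y\in\mathcal N_i\}$. For a tree $T$ on $[n]$, an edge $uv\notin E(T)$ is permitted by ${\bf oDFS}(T)$ if there is $i$ with $u,v\in\mathcal O_i$ (stacks computed by running ${\bf oDFS}(T)$). *)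

theory Defs
  imports Main
begin

definition graph_on :: "nat \<Rightarrow> nat set set \<Rightarrow> bool" where
  "graph_on n E \<longleftrightarrow> (\<forall>e\<in>E. \<exists>u v. e = {u, v} \<and> u \<noteq> v \<and> u \<in> {1..n} \<and> v \<in> {1..n})"

definition adj :: "nat set set \<Rightarrow> (nat \<times> nat) set" where
  "adj E = {(u, v). {u, v} \<in> E}"

definition connected_on :: "nat \<Rightarrow> nat set set \<Rightarrow> bool" where
  "connected_on n E \<longleftrightarrow> graph_on n E \<and> (\<forall>u\<in>{1..n}. \<forall>v\<in>{1..n}. (u, v) \<in> (adj E)\<^sup>*)"

definition has_cycle :: "nat set set \<Rightarrow> bool" where
  "has_cycle E \<longleftrightarrow> (\<exists>vs. length vs \<ge> 3 \<and> distinct vs \<and>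
     (\<forall>i < length vs. {vs ! i, vs ! ((i + 1) mod length vs)} \<in> E))"

definition tree_on :: "nat \<Rightarrow> nat set set \<Rightarrow> bool" where
  "tree_on n E \<longleftrightarrow> connected_on n E \<and> \<not> has_cycle E"

text \<open>One step of oDFS on state (A_i, O_i). (If the stack is empty nothing happens;
  this never occurs for i < n on a connected graph.)\<close>
definition odfs_N :: "nat set set \<Rightarrow> nat set \<Rightarrow> nat list \<Rightarrow> nat \<Rightarrow> nat set" where
  "odfs_N E A Os v = {y. {v, y} \<in> E \<and> y \<notin> A \<and> y \<notin> set Os}"

fun odfs_step :: "nat set set \<Rightarrow> nat set \<times> nat list \<Rightarrow> nat set \<times> nat list" where
  "odfs_step E (A, []) = (A, [])"
| "odfs_step E (A, v # rest) =
     (insert v A, sorted_list_of_set (odfs_N E A (v # rest) v) @ rest)"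

definition odfs_state :: "nat set set \<Rightarrow> nat \<Rightarrow> nat set \<times> nat list" where
  "odfs_state E i = (odfs_step E ^^ i) ({}, [1])"

definition odfs_A :: "nat set set \<Rightarrow> nat \<Rightarrow> nat set" where
  "odfs_A E i = fst (odfs_state E i)"

definition odfs_O :: "nat set set \<Rightarrow> nat \<Rightarrow> nat list" where
  "odfs_O E i = snd (odfs_state E i)"

definition odfs_v :: "nat set set \<Rightarrow> nat \<Rightarrow> nat" where
  "odfs_v E i = hd (odfs_O E i)"

definition odfs_Ni :: "nat set set \<Rightarrow> nat \<Rightarrow> nat set" where
  "odfs_Ni E i = odfs_N E (odfs_A E i) (odfs_O E i) (odfs_v E i)"

definition dfs_tree :: "nat \<Rightarrow> nat set set \<Rightarrow> nat set set" where
  "dfs_tree n E = {{odfs_v E i, y} | i y. i < n \<and> y \<in> odfs_Ni E i}"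

definition permitted :: "nat \<Rightarrow> nat set set \<Rightarrow> nat set set" where
  "permitted n T = {{u, v} | u v. u \<noteq> v \<and> {u, v} \<notin> T \<and>
      (\<exists>i \<le> n. u \<in> set (odfs_O T i) \<and> v \<in> set (odfs_O T i))}"

end

theory Submission imports Defs "HOL-Library.Transitive_Closure_Table" begin

lemma state_Suc: "odfs_state E (Suc i) = odfs_step E (odfs_state E i)"
  by (simp add: odfs_state_def)

lemma A0: "odfs_A E 0 = {}" and O0: "odfs_O E 0 = [1]"
  by (simp_all add: odfs_A_def odfs_O_def odfs_state_def)

lemma A_Suc: "odfs_A E (Suc i) = (if odfs_O E i = [] then odfs_A E i else insert (odfs_v E i) (odfs_A E i))"
  and O_Suc: "odfs_O E (Suc i) = (if odfs_O E i = [] then [] else sorted_list_of_set (odfs_Ni E i) @ tl (odfs_O E i))"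
proof -
  obtain A Os where st: "odfs_state E i = (A, Os)" by (cases "odfs_state E i")
  have "odfs_A E (Suc i) = (if odfs_O E i = [] then odfs_A E i else insert (odfs_v E i) (odfs_A E i))
      \<and> odfs_O E (Suc i) = (if odfs_O E i = [] then [] else sorted_list_of_set (odfs_Ni E i) @ tl (odfs_O E i))"
    by (cases Os) (simp_all add: odfs_A_def odfs_O_def state_Suc st odfs_v_def odfs_Ni_def)
  then show "odfs_A E (Suc i) = (if odfs_O E i = [] then odfs_A E i else insert (odfs_v E i) (odfs_A E i))"
    "odfs_O E (Suc i) = (if odfs_O E i = [] then [] else sorted_list_of_set (odfs_Ni E i) @ tl (odfs_O E i))"
    by blast+
qed

lemma N_sub: "graph_on n E \<Longrightarrow> odfs_N E A Os v \<subseteq> {1..n}"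
  unfolding graph_on_def odfs_N_def by (auto simp: doubleton_eq_iff)

lemma Ni_fin: "graph_on n E \<Longrightarrow> finite (odfs_Ni E i)"
  unfolding odfs_Ni_def by (meson N_sub finite_atLeastAtMost finite_subset)

lemma Ni_props: "y \<in> odfs_Ni E i \<Longrightarrow> {odfs_v E i, y} \<in> E \<and> y \<notin> odfs_A E i \<and> y \<notin> set (odfs_O E i)"
  unfolding odfs_Ni_def odfs_N_def by auto

lemma inv:
  assumes g: "graph_on n E" and n: "n \<ge> 1"
  shows "finite (odfs_A E i) \<and> odfs_A E i \<union> set (odfs_O E i) \<subseteq> {1..n} \<and> distinct (odfs_O E i)
     \<and> odfs_A E i \<inter> set (odfs_O E i) = {} \<and> 1 \<in> odfs_A E i \<union> set (odfs_O E i)"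
proof (induction i)
  case 0 then show ?case using n by (simp add: A0 O0)
next
  case (Suc i)
  show ?case
  proof (cases "odfs_O E i")
    case Nil then show ?thesis using Suc by (simp add: A_Suc O_Suc)
  next
    case (Cons v rest)
    have v: "odfs_v E i = v" using Cons by (simp add: odfs_v_def)
    have fin: "finite (odfs_Ni E i)" using Ni_fin[OF g] .
    have sub: "odfs_Ni E i \<subseteq> {1..n}" using N_sub[OF g] unfolding odfs_Ni_def by blast
    have dis: "y \<in> odfs_Ni E i \<Longrightarrow> y \<notin> odfs_A E i \<and> y \<notin> set (odfs_O E i)" for y using Ni_props by blast
    show ?thesis using Suc Cons fin sub dis
      by (simp add: A_Suc O_Suc v) (auto)
  qed
qed

lemma closure:
  assumes g: "graph_on n E" and n: "n \<ge> 1"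
  shows "x \<in> odfs_A E i \<Longrightarrow> {x, y} \<in> E \<Longrightarrow> y \<in> odfs_A E i \<union> set (odfs_O E i)"
proof (induction i)
  case 0 then show ?case by (simp add: A0)
next
  case (Suc i)
  show ?case
  proof (cases "odfs_O E i")
    case Nil then show ?thesis using Suc by (simp add: A_Suc O_Suc)
  next
    case (Cons v rest)
    have v: "odfs_v E i = v" using Cons by (simp add: odfs_v_def)
    have fin: "finite (odfs_Ni E i)" using Ni_fin[OF g] .
    have N: "odfs_Ni E i = {y. {v, y} \<in> E \<and> y \<notin> odfs_A E i \<and> y \<notin> set (odfs_O E i)}"
      unfolding odfs_Ni_def odfs_N_def v by simp
    show ?thesis using Suc Cons fin N
      by (simp add: A_Suc O_Suc v) blast
  qed
qed

lemma mono1: "odfs_A E i \<subseteq> odfs_A E (Suc i) \<and> odfs_A E i \<union> set (odfs_O E i) \<subseteq> odfs_A E (Suc i) \<union> set (odfs_O E (Suc i))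
   \<and> (odfs_O E i = [] \<longrightarrow> odfs_O E (Suc i) = [])"
  by (cases "odfs_O E i") (auto simp: A_Suc O_Suc odfs_v_def)

lemma mono:
  assumes "i \<le> j"
  shows "odfs_A E i \<subseteq> odfs_A E j \<and> odfs_A E i \<union> set (odfs_O E i) \<subseteq> odfs_A E j \<union> set (odfs_O E j)
   \<and> (odfs_O E i = [] \<longrightarrow> odfs_O E j = [])"
  using assms
proof (induction j)
  case 0 then show ?case by simp
next
  case (Suc j)
  show ?case
  proof (cases "i = Suc j")
    case False then have "i \<le> j" using Suc by simp
    then show ?thesis using Suc mono1[of E j] by blast
  qed simp
qed

lemma v_in_A: "odfs_O E k \<noteq> [] \<Longrightarrow> k < i \<Longrightarrow> odfs_v E k \<in> odfs_A E i"
  using mono[of "Suc k" i E] by (auto simp: A_Suc)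

lemma A_mem: "x \<in> odfs_A E i \<Longrightarrow> \<exists>k<i. odfs_O E k \<noteq> [] \<and> x = odfs_v E k"
proof (induction i)
  case 0 then show ?case by (simp add: A0)
next
  case (Suc i) then show ?case by (auto simp: A_Suc split: if_splits intro: less_SucI)
qed

lemma card_A:
  assumes g: "graph_on n E" and n: "n \<ge> 1"
  shows "(\<forall>k<i. odfs_O E k \<noteq> []) \<Longrightarrow> card (odfs_A E i) = i"
proof (induction i)
  case 0 then show ?case by (simp add: A0)
next
  case (Suc i)
  then have ne: "odfs_O E i \<noteq> []" by simp
  have "odfs_v E i \<notin> odfs_A E i" using inv[OF g n, of i] ne
    by (cases "odfs_O E i") (auto simp: odfs_v_def)
  then show ?case using Suc inv[OF g n, of i] ne by (simp add: A_Suc)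
qed

lemma coverage_ne:
  assumes c: "connected_on n E" and n: "n \<ge> 1"
  shows "i < n \<Longrightarrow> odfs_O E i \<noteq> []"
proof (induction i rule: less_induct)
  case (less i)
  have g: "graph_on n E" using c connected_on_def by blast
  show ?case
  proof
    assume e: "odfs_O E i = []"
    have cA: "card (odfs_A E i) = i" using card_A[OF g n] less by auto
    have I: "finite (odfs_A E i) \<and> odfs_A E i \<subseteq> {1..n} \<and> 1 \<in> odfs_A E i"
      using inv[OF g n, of i] e by auto
    have cl: "x \<in> odfs_A E i \<Longrightarrow> (x, y) \<in> adj E \<Longrightarrow> y \<in> odfs_A E i" for x y
      using closure[OF g n, of x i y] e by (auto simp: adj_def)
    have "(1, u) \<in> (adj E)\<^sup>* \<Longrightarrow> u \<in> odfs_A E i" for u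
      by (induction rule: rtrancl_induct) (use I cl in auto)
    then have "{1..n} \<subseteq> odfs_A E i" using c n unfolding connected_on_def by auto
    then have "odfs_A E i = {1..n}" using I by auto
    then show False using cA less by simp
  qed
qed

lemma coverage:
  assumes c: "connected_on n E" and n: "n \<ge> 1" and u: "u \<in> {1..n}"
  shows "\<exists>i<n. odfs_O E i \<noteq> [] \<and> u = odfs_v E i"
proof -
  have g: "graph_on n E" using c connected_on_def by blast
  have cA: "card (odfs_A E n) = n" using card_A[OF g n] coverage_ne[OF c n] by auto
  have I: "finite (odfs_A E n) \<and> odfs_A E n \<subseteq> {1..n}" using inv[OF g n, of n] by auto
  have "odfs_A E n = {1..n}" using I cA by (simp add: card_subset_eq)
  then show ?thesis using A_mem u by blast
qed

lemma key:
  assumes g: "graph_on n E" and n: "n \<ge> 1" and e: "{a, b} \<in> E"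
    and a: "a = odfs_v E i" and b: "b = odfs_v E k" and ne: "odfs_O E i \<noteq> []" "odfs_O E k \<noteq> []"
    and ik: "i < k"
  shows "b \<in> odfs_Ni E i \<or> b \<in> set (tl (odfs_O E i))"
proof -
  have "a \<in> odfs_A E (Suc i)" using a ne by (simp add: A_Suc)
  then have b1: "b \<in> odfs_A E (Suc i) \<union> set (odfs_O E (Suc i))" using closure[OF g n] e by blast
  have "b \<notin> odfs_A E (Suc i)"
  proof
    assume "b \<in> odfs_A E (Suc i)"
    then have "b \<in> odfs_A E k" using mono[of "Suc i" k E] ik by auto
    moreover have "b \<in> set (odfs_O E k)" using b ne by (cases "odfs_O E k") (auto simp: odfs_v_def)
    ultimately show False using inv[OF g n, of k] by auto
  qed
  then show ?thesis using b1 ne Ni_fin[OF g, of i] by (simp add: O_Suc)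
qed

definition D :: "nat set set \<Rightarrow> nat \<Rightarrow> nat set set" where
  "D E i = {{odfs_v E k, y} | k y. k < i \<and> y \<in> odfs_Ni E k}"

lemma adj_mono: "F \<subseteq> F' \<Longrightarrow> (adj F)\<^sup>* \<subseteq> (adj F')\<^sup>*"
  by (rule rtrancl_mono) (auto simp: adj_def)

lemma D_reach:
  assumes g: "graph_on n E"
  shows "x \<in> odfs_A E i \<union> set (odfs_O E i) \<Longrightarrow> (1, x) \<in> (adj (D E i))\<^sup>*"
proof (induction i arbitrary: x)
  case 0 then show ?case by (simp add: A0 O0)
next
  case (Suc i)
  have Dm: "D E i \<subseteq> D E (Suc i)" unfolding D_def using less_Suc_eq by blast
  show ?case
  proof (cases "odfs_O E i")
    case Nil then show ?thesis using Suc adj_mono[OF Dm] by (auto simp: A_Suc O_Suc)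
  next
    case (Cons v rest)
    have v: "odfs_v E i = v" using Cons by (simp add: odfs_v_def)
    have fin: "finite (odfs_Ni E i)" using Ni_fin[OF g] .
    show ?thesis
    proof (cases "x \<in> odfs_Ni E i")
      case True
      have "(1, v) \<in> (adj (D E i))\<^sup>*" using Suc.IH Cons by simp
      then have "(1, v) \<in> (adj (D E (Suc i)))\<^sup>*" using adj_mono[OF Dm] by auto
      moreover have "(v, x) \<in> adj (D E (Suc i))" using True v unfolding adj_def D_def by blast
      ultimately show ?thesis by simp
    next
      case False
      then have "x \<in> odfs_A E i \<union> set (odfs_O E i)" using Suc.prems Cons fin v
        by (auto simp: A_Suc O_Suc)
      then show ?thesis using Suc.IH adj_mono[OF Dm] by auto
    qed
  qed
qed

lemma path_nth: "rtrancl_path r x xs y \<Longrightarrow> (\<forall>i<length xs. r ((x#xs)!i) (xs!i)) \<and> last (x#xs) = y"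
proof (induction rule: rtrancl_path.induct)
  case (base x) then show ?case by simp
next
  case (step x y ys z)
  then show ?case by (auto simp: less_Suc_eq_0_disj)
qed

lemma cycle_lemma:
  assumes e: "{a, b} \<in> E" and ab: "a \<noteq> b" and F: "F \<subseteq> E" "{a, b} \<notin> F"
    and p: "(b, a) \<in> (adj F)\<^sup>*"
  shows "has_cycle E"
proof -
  let ?r = "\<lambda>u v. (u, v) \<in> adj F"
  have "?r\<^sup>*\<^sup>* b a" using p by (simp add: rtranclp_rtrancl_eq)
  then obtain xs where "rtrancl_path ?r b xs a" using rtranclp_eq_rtrancl_path by metis
  then obtain ys where P: "rtrancl_path ?r b ys a" and d: "distinct (b # ys)"
    using rtrancl_path_distinct by metis
  note pn = path_nth[OF P]
  have ys: "ys \<noteq> []" using pn ab by auto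
  have len: "length ys \<ge> 2"
  proof (rule ccontr)
    assume "\<not> ?thesis"
    then obtain z where "ys = [z]" using ys by (cases ys) (auto simp: Suc_le_eq)
    then have "z = a" "{b, a} \<in> F" using pn by (auto simp: adj_def)
    then show False using F by (simp add: insert_commute)
  qed
  let ?vs = "b # ys"
  have "\<forall>i<length ?vs. {?vs ! i, ?vs ! ((i + 1) mod length ?vs)} \<in> E"
  proof (intro allI impI)
    fix i assume i: "i < length ?vs"
    show "{?vs ! i, ?vs ! ((i + 1) mod length ?vs)} \<in> E"
    proof (cases "i < length ys")
      case True
      then have "(?vs ! i, ys ! i) \<in> adj F" using pn by blast
      then show ?thesis using True F by (auto simp: adj_def)
    next
      case False
      then have ii: "i = length ys" using i by simp
      have "?vs ! i = a" using pn ii ys by (simp add: last_conv_nth)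
      moreover have "(i + 1) mod length ?vs = 0" using ii by simp
      ultimately show ?thesis using e by (simp add: insert_commute)
    qed
  qed
  then show ?thesis unfolding has_cycle_def using d len
    by (intro exI[of _ ?vs]) auto
qed

lemma run_eq:
  assumes "\<And>k. k < m \<Longrightarrow> odfs_state G k = odfs_state T k \<Longrightarrow> odfs_Ni G k = odfs_Ni T k"
  shows "i \<le> m \<Longrightarrow> odfs_state G i = odfs_state T i"
proof (induction i)
  case 0 then show ?case by (simp add: odfs_state_def)
next
  case (Suc i)
  then have eq: "odfs_state G i = odfs_state T i" by simp
  have Ni: "odfs_Ni G i = odfs_Ni T i" using assms Suc eq by simp
  obtain A Os where st: "odfs_state T i = (A, Os)" by (cases "odfs_state T i")
  show ?case
  proof (cases Os)
    case Nil then show ?thesis using eq st by (simp add: state_Suc)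
  next
    case (Cons v rest)
    have "odfs_Ni G i = odfs_N G A (v # rest) v" "odfs_Ni T i = odfs_N T A (v # rest) v"
      using eq st Cons by (simp_all add: odfs_Ni_def odfs_A_def odfs_O_def odfs_v_def)
    then show ?thesis using eq st Cons Ni by (simp add: state_Suc)
  qed
qed

lemma state_eq_parts: "odfs_state G k = odfs_state T k \<Longrightarrow>
   odfs_A G k = odfs_A T k \<and> odfs_O G k = odfs_O T k \<and> odfs_v G k = odfs_v T k"
  by (simp add: odfs_A_def odfs_O_def odfs_v_def)

lemma dfs_tree_sub: "dfs_tree n E \<subseteq> E"
  unfolding dfs_tree_def using Ni_props by blast

lemma dfs_tree_self:
  assumes n: "n \<ge> 1" and t: "tree_on n T"
  shows "dfs_tree n T = T"
proof
  show "dfs_tree n T \<subseteq> T" by (rule dfs_tree_sub)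
  have c: "connected_on n T" using t tree_on_def by blast
  have g: "graph_on n T" using c connected_on_def by blast
  have nc: "\<not> has_cycle T" using t tree_on_def by blast
  have main: "{a, b} \<in> dfs_tree n T" if e: "{a, b} \<in> T" and ab: "a \<noteq> b"
    and a: "a = odfs_v T i" and b: "b = odfs_v T k" and ne: "odfs_O T i \<noteq> []" "odfs_O T k \<noteq> []"
    and ik: "i < k" and kn: "k < n" for a b i k
  proof -
    from key[OF g n e a b ne ik]
    show ?thesis
    proof
      assume "b \<in> odfs_Ni T i"
      moreover have "i < n" using ik kn by simp
      ultimately show ?thesis unfolding dfs_tree_def using a by blast
    next
      assume bt: "b \<in> set (tl (odfs_O T i))"
      then have bO: "b \<in> set (odfs_O T i)" by (cases "odfs_O T i") auto
      have aO: "a \<in> set (odfs_O T i)" using a ne by (cases "odfs_O T i") (auto simp: odfs_v_def)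
      have I: "odfs_A T i \<inter> set (odfs_O T i) = {}" using inv[OF g n, of i] by auto
      have DT: "D T i \<subseteq> T" unfolding D_def using Ni_props by blast
      have Dab: "{a, b} \<notin> D T i"
      proof
        assume "{a, b} \<in> D T i"
        then obtain k' y where k': "{a, b} = {odfs_v T k', y}" "k' < i" unfolding D_def by blast
        have "odfs_O T k' \<noteq> []" using mono[of k' i T] k' ne by auto
        then have "odfs_v T k' \<in> odfs_A T i" using v_in_A k' by blast
        moreover have "odfs_v T k' \<in> {a, b}" using k' by auto
        ultimately show False using I aO bO by auto
      qed
      have "(1, a) \<in> (adj (D T i))\<^sup>*" "(1, b) \<in> (adj (D T i))\<^sup>*"
        using D_reach[OF g] aO bO by auto
      moreover have "sym ((adj (D T i))\<^sup>*)"
        by (rule sym_rtrancl) (auto simp: sym_def adj_def insert_commute)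
      ultimately have "(b, a) \<in> (adj (D T i))\<^sup>*"
        by (meson rtrancl_trans symD)
      then have "has_cycle T" using cycle_lemma[OF e ab DT Dab] by blast
      then show ?thesis using nc by blast
    qed
  qed
  show "T \<subseteq> dfs_tree n T"
  proof
    fix e assume eT: "e \<in> T"
    then obtain a b where e: "e = {a, b}" "a \<noteq> b" "a \<in> {1..n}" "b \<in> {1..n}"
      using g unfolding graph_on_def by blast
    obtain i where i: "i < n" "odfs_O T i \<noteq> []" "a = odfs_v T i" using coverage[OF c n e(3)] by blast
    obtain k where k: "k < n" "odfs_O T k \<noteq> []" "b = odfs_v T k" using coverage[OF c n e(4)] by blast
    have "i \<noteq> k" using i k e by auto
    then consider "i < k" | "k < i" by linarith
    then show "e \<in> dfs_tree n T"
    proof cases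
      case 1 then show ?thesis using main[of a b i k] eT e i k by auto
    next
      case 2 then show ?thesis using main[of b a k i] eT e i k by (auto simp: insert_commute)
    qed
  qed
qed

theorem lemma2:
  fixes n :: nat and T G :: "nat set set"
  assumes "n \<ge> 1"
    and "tree_on n T"
    and "connected_on n G"
  shows "dfs_tree n G = T \<longleftrightarrow> (\<exists>S. S \<subseteq> permitted n T \<and> G = T \<union> S)"
proof
  note n = assms(1)
  have cT: "connected_on n T" using assms(2) tree_on_def by blast
  have gT: "graph_on n T" using cT connected_on_def by blast
  have gG: "graph_on n G" using assms(3) connected_on_def by blast
  assume dt: "dfs_tree n G = T"
  have TG: "T \<subseteq> G" using dfs_tree_sub dt by blast
  have NiEq: "odfs_Ni G k = odfs_Ni T k" if k: "k < n" and st: "odfs_state G k = odfs_state T k" for k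
  proof -
    note sp = state_eq_parts[OF st]
    have "odfs_Ni G k = odfs_N G (odfs_A T k) (odfs_O T k) (odfs_v T k)"
      using sp by (simp add: odfs_Ni_def)
    moreover have "odfs_N G (odfs_A T k) (odfs_O T k) (odfs_v T k) = odfs_Ni T k"
    proof
      show "odfs_N G (odfs_A T k) (odfs_O T k) (odfs_v T k) \<subseteq> odfs_Ni T k"
      proof
        fix y assume y: "y \<in> odfs_N G (odfs_A T k) (odfs_O T k) (odfs_v T k)"
        then have "y \<in> odfs_Ni G k" using sp by (simp add: odfs_Ni_def)
        then have "{odfs_v G k, y} \<in> dfs_tree n G" unfolding dfs_tree_def using k by blast
        then show "y \<in> odfs_Ni T k" using y dt sp by (simp add: odfs_Ni_def odfs_N_def)
      qed
      show "odfs_Ni T k \<subseteq> odfs_N G (odfs_A T k) (odfs_O T k) (odfs_v T k)"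
        using TG by (auto simp: odfs_Ni_def odfs_N_def)
    qed
    ultimately show ?thesis by simp
  qed
  have steq: "i \<le> n \<Longrightarrow> odfs_state G i = odfs_state T i" for i
    using run_eq[of n G T, OF NiEq] by blast
  have "G - T \<subseteq> permitted n T"
  proof
    fix e assume eGT: "e \<in> G - T"
    then obtain a b where e: "e = {a, b}" "a \<noteq> b" "a \<in> {1..n}" "b \<in> {1..n}"
      using gG unfolding graph_on_def by blast
    obtain i where i: "i < n" "odfs_O G i \<noteq> []" "a = odfs_v G i" using coverage[OF assms(3) n e(3)] by blast
    obtain k where k: "k < n" "odfs_O G k \<noteq> []" "b = odfs_v G k" using coverage[OF assms(3) n e(4)] by blast
    have main: "e \<in> permitted n T" if eq: "e = {a, b}" "a \<noteq> b" and a: "a = odfs_v G i" and b: "b = odfs_v G k"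
      and ne: "odfs_O G i \<noteq> []" "odfs_O G k \<noteq> []" and ik: "i < k" and kn: "k < n" for a b i k
    proof -
      have eG: "{a, b} \<in> G" using eGT eq by simp
      from key[OF gG n eG a b ne ik]
      show ?thesis
      proof
        assume "b \<in> odfs_Ni G i"
        moreover have "i < n" using ik kn by simp
        ultimately have "{a, b} \<in> dfs_tree n G" unfolding dfs_tree_def using a by blast
        then show ?thesis using dt eGT eq by simp
      next
        assume bt: "b \<in> set (tl (odfs_O G i))"
        then have bO: "b \<in> set (odfs_O G i)" by (cases "odfs_O G i") auto
        have aO: "a \<in> set (odfs_O G i)" using a ne by (cases "odfs_O G i") (auto simp: odfs_v_def)
        have "odfs_O G i = odfs_O T i" using state_eq_parts[OF steq] ik kn by simp
        then show ?thesis unfolding permitted_def using aO bO eq eGT ik kn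
          by (intro CollectI exI[of _ a] exI[of _ b]) (auto intro!: exI[of _ i])
      qed
    qed
    have "i \<noteq> k" using i k e by auto
    then consider "i < k" | "k < i" by linarith
    then show "e \<in> permitted n T"
    proof cases
      case 1 then show ?thesis using main[of a b i k] e i k by auto
    next
      case 2 then show ?thesis using main[of b a k i] e i k by (auto simp: insert_commute)
    qed
  qed
  then show "\<exists>S. S \<subseteq> permitted n T \<and> G = T \<union> S" using TG by (intro exI[of _ "G - T"]) auto
next
  note n = assms(1)
  have cT: "connected_on n T" using assms(2) tree_on_def by blast
  have gT: "graph_on n T" using cT connected_on_def by blast
  assume "\<exists>S. S \<subseteq> permitted n T \<and> G = T \<union> S"
  then obtain S where S: "S \<subseteq> permitted n T" "G = T \<union> S" by blast
  have NiEq: "odfs_Ni G k = odfs_Ni T k" if k: "k < n" and st: "odfs_state G k = odfs_state T k" for k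
  proof -
    note sp = state_eq_parts[OF st]
    have "odfs_Ni G k = odfs_N G (odfs_A T k) (odfs_O T k) (odfs_v T k)"
      using sp by (simp add: odfs_Ni_def)
    moreover have "odfs_N G (odfs_A T k) (odfs_O T k) (odfs_v T k) = odfs_Ni T k"
    proof
      show "odfs_N G (odfs_A T k) (odfs_O T k) (odfs_v T k) \<subseteq> odfs_Ni T k"
      proof
        fix y assume y: "y \<in> odfs_N G (odfs_A T k) (odfs_O T k) (odfs_v T k)"
        let ?v = "odfs_v T k"
        have yn: "y \<notin> odfs_A T k \<union> set (odfs_O T k)" using y by (simp add: odfs_N_def)
        have "{?v, y} \<in> T"
        proof (rule ccontr)
          assume nT: "{?v, y} \<notin> T"
          then have "{?v, y} \<in> permitted n T" using y S by (auto simp: odfs_N_def)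
          then obtain p q j where pq: "{?v, y} = {p, q}" "j \<le> n" "p \<in> set (odfs_O T j)" "q \<in> set (odfs_O T j)"
            unfolding permitted_def by blast
          have vj: "?v \<in> set (odfs_O T j)" "y \<in> set (odfs_O T j)" using pq by (auto simp: doubleton_eq_iff)
          show False
          proof (cases "j \<le> k")
            case True
            then show False using mono[OF True, of T] vj yn by blast
          next
            case False
            have ne: "odfs_O T k \<noteq> []" using mono[of k j T] False vj by auto
            then have "?v \<in> odfs_A T j" using v_in_A False by simp
            then show False using inv[OF gT n, of j] vj by auto
          qed
        qed
        then show "y \<in> odfs_Ni T k" using y by (simp add: odfs_Ni_def odfs_N_def)
      qed
      show "odfs_Ni T k \<subseteq> odfs_N G (odfs_A T k) (odfs_O T k) (odfs_v T k)"
        using S by (auto simp: odfs_Ni_def odfs_N_def)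
    qed
    ultimately show ?thesis by simp
  qed
  have steq: "i \<le> n \<Longrightarrow> odfs_state G i = odfs_state T i" for i
    using run_eq[of n G T, OF NiEq] by blast
  have "dfs_tree n G = dfs_tree n T"
    unfolding dfs_tree_def using steq state_eq_parts NiEq
    by (smt (verit, ccfv_SIG) Collect_cong less_imp_le)
  then show "dfs_tree n G = T" using dfs_tree_self[OF n assms(2)] by simp
qed

end
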